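(* Let $\Gamma$ and $\Xi$ be as in the context. For any $\gamma,\gamma_1,\gamma_2\in\Gamma$ and $\xi_1,\xi_2\in\Xi$, $$d_o^2(\gamma_1\xi_1\infty,\gamma_2\xi_2\infty)\,\tilde h(\gamma_1\xi_1\infty)\,\tilde h(\gamma_2\xi_2\infty)=d_o^2(\gamma\gamma_1\xi_1\infty,\gamma\gamma_2\xi_2\infty)\,\tilde h(\gamma\gamma_1\xi_1\infty)\,\tilde h(\gamma\gamma_2\xi_2\infty).$$
   Context: $n\ge2$, $G=\mathrm{SO}(n,1)$, $K\cong\mathrm{SO}(n)$ maximal compact, $\mathbb H^n=G/K$ with hyperbolic distance $d$, $o=K$. $A$ a one-parameter $\mathbb R$-split torus, $M=Z_G(A)\cap K$, $N$ the expanding horospherical subgroup, $P=MAN$; $\partial\mathbb H^n=G/P\cong\mathbb R^{n-1}\cup\{\infty\}$ with $\infty=P$. $\Gamma\subset G$ discrete with finite covolume and $\Xi\subset G$ a finite set (containing $e$) of cusp representatives; $\gamma\xi\infty$ are the cusps. Busemann function: $B_\zeta(x,y)=\lim_{t\to\infty}(d(x,\zeta(t))-d(y,\zeta(t)))$ for a geodesic ray $\zeta(t)\to\zeta$. Busemann height: $\tilde h(\gamma\xi\infty)=\exp(B_{\xi\infty}(\gamma^{-1}o,o))$ (defined via the pair $(\gamma,\xi)$). Gromov metric: $d_o(\zeta_1,\zeta_2)=\exp\big(-\tfrac12\lim_{t\to\infty}(B_{\zeta_1}(o,\zeta(t))+B_{\zeta_2}(o,\zeta(t)))\big)$ with $\zeta(t)$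 a geodesic ray converging to $\zeta_1$. *)

theory Defs
  imports "HOL-Analysis.Analysis"
begin

text \<open>Hyperboloid model. Minkowski space is real^('n option); the coordinate None is the
time coordinate, the coordinates Some i (i :: 'n) are the space coordinates, so n = CARD('n).\<close>

type_synonym 'n mvec = "real ^ ('n option)"
type_synonym 'n mmat = "real ^ ('n option) ^ ('n option)"

definition mink :: "'n::finite mvec \<Rightarrow> 'n mvec \<Rightarrow> real" where
  "mink x y = x $ None * y $ None - (\<Sum>i\<in>(UNIV::'n set). x $ Some i * y $ Some i)"

definition minkJ :: "'n::finite mmat" where
  "minkJ = (\<chi> i j. if i = j then (if i = None then 1 else -1) else 0)"

definition hyp :: "'n::finite mvec set" where
  "hyp = {x. mink x x = 1 \<and> x $ None > 0}"

definition hdist :: "'n::finite mvec \<Rightarrow> 'n mvec \<Rightarrow> real" where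
  "hdist x y = arcosh (mink x y)"

text \<open>G = SO(n,1) (identity component): determinant one, preserving the Minkowski form and
the upper sheet. Elements act on hyp by matrix-vector multiplication.\<close>
definition SOn1 :: "'n::finite mmat set" where
  "SOn1 = {A. transpose A ** minkJ ** A = minkJ \<and> det A = 1 \<and> A $ None $ None > 0}"

text \<open>Boundary at infinity: null directions, normalised to time coordinate 1.\<close>
definition bdry :: "'n::finite mvec set" where
  "bdry = {p. p $ None = 1 \<and> mink p p = 0}"

definition normz :: "'n::finite mvec \<Rightarrow> 'n mvec" where
  "normz x = (1 / x $ None) *\<^sub>R x"

definition bd_act :: "'n::finite mmat \<Rightarrow> 'n mvec \<Rightarrow> 'n mvec" where
  "bd_act A p = normz (A *v p)"

definition georay :: "(real \<Rightarrow> 'n::finite mvec) \<Rightarrow> bool" where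
  "georay r \<longleftrightarrow> (\<forall>t. r t \<in> hyp) \<and>
     (\<forall>s t. 0 \<le> s \<longrightarrow> 0 \<le> t \<longrightarrow> hdist (r s) (r t) = \<bar>s - t\<bar>)"

definition ray_to :: "(real \<Rightarrow> 'n::finite mvec) \<Rightarrow> 'n mvec \<Rightarrow> bool" where
  "ray_to r \<zeta> \<longleftrightarrow> ((\<lambda>t. normz (r t)) \<longlongrightarrow> \<zeta>) at_top"

definition some_ray :: "'n::finite mvec \<Rightarrow> real \<Rightarrow> 'n mvec" where
  "some_ray \<zeta> = (SOME r. georay r \<and> ray_to r \<zeta>)"

definition busemann :: "'n::finite mvec \<Rightarrow> 'n mvec \<Rightarrow> 'n mvec \<Rightarrow> real" where
  "busemann \<zeta> x y = Lim at_top (\<lambda>t. hdist x (some_ray \<zeta> t) - hdist y (some_ray \<zeta> t))"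

text \<open>Gromov (visual) metric based at o; when the limit diverges (to +infinity, i.e.
zeta1 = zeta2) the value is exp(-infinity) = 0.\<close>
definition gromov :: "'n::finite mvec \<Rightarrow> 'n mvec \<Rightarrow> 'n mvec \<Rightarrow> real" where
  "gromov o' \<zeta>1 \<zeta>2 =
     (let f = (\<lambda>t. busemann \<zeta>1 o' (some_ray \<zeta>1 t) + busemann \<zeta>2 o' (some_ray \<zeta>1 t))
      in if (\<exists>L. (f \<longlongrightarrow> L) at_top) then exp (- (Lim at_top f) / 2) else 0)"

definition htilde :: "'n::finite mvec \<Rightarrow> 'n mvec \<Rightarrow> 'n mmat \<Rightarrow> 'n mmat \<Rightarrow> real" where
  "htilde o' infty \<gamma> \<xi> = exp (busemann (bd_act \<xi> infty) (matrix_inv \<gamma> *v o') o')"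

definition discrete_subgroup :: "'n::finite mmat set \<Rightarrow> bool" where
  "discrete_subgroup \<Gamma> \<longleftrightarrow> \<Gamma> \<subseteq> SOn1 \<and> mat 1 \<in> \<Gamma> \<and>
     (\<forall>g\<in>\<Gamma>. \<forall>h\<in>\<Gamma>. g ** h \<in> \<Gamma>) \<and> (\<forall>g\<in>\<Gamma>. matrix_inv g \<in> \<Gamma>) \<and>
     (\<forall>g\<in>\<Gamma>. \<exists>e>0. \<forall>h\<in>\<Gamma>. dist h g < e \<longrightarrow> h = g)"

text \<open>Coordinates on hyp by the space part u; hyperbolic volume density is
1/sqrt(1+|u|^2) du.\<close>
definition lift :: "real ^ 'n \<Rightarrow> 'n::finite mvec" where
  "lift u = (\<chi> i. case i of None \<Rightarrow> sqrt (1 + (norm u)\<^sup>2) | Some j \<Rightarrow> u $ j)"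

definition proj :: "'n::finite mvec \<Rightarrow> real ^ 'n" where
  "proj x = (\<chi> j. x $ Some j)"

definition finite_covolume :: "'n::finite mmat set \<Rightarrow> bool" where
  "finite_covolume \<Gamma> \<longleftrightarrow> (\<exists>F. F \<in> sets lebesgue \<and>
     (\<forall>u. \<exists>g\<in>\<Gamma>. proj (g *v lift u) \<in> F) \<and>
     (\<forall>g\<in>\<Gamma>. g \<noteq> mat 1 \<longrightarrow>
        F \<inter> {u. proj (matrix_inv g *v lift u) \<in> F} \<in> null_sets lebesgue) \<and>
     (\<integral>\<^sup>+ u. indicator F u * ennreal (1 / sqrt (1 + (norm u)\<^sup>2)) \<partial>lebesgue) < \<infinity>)"

definition parabolic :: "'n::finite mmat \<Rightarrow> bool" where
  "parabolic g \<longleftrightarrow> g \<in> SOn1 \<and> g \<noteq> mat 1 \<and> (\<forall>x\<in>hyp. g *v x \<noteq> x) \<and>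
     (\<exists>!p. p \<in> bdry \<and> bd_act g p = p)"

definition cusps :: "'n::finite mmat set \<Rightarrow> 'n mvec set" where
  "cusps \<Gamma> = {p \<in> bdry. \<exists>g\<in>\<Gamma>. parabolic g \<and> bd_act g p = p}"

definition cusp_reps :: "'n::finite mmat set \<Rightarrow> 'n mvec \<Rightarrow> 'n mmat set \<Rightarrow> bool" where
  "cusp_reps \<Gamma> infty \<Xi> \<longleftrightarrow> finite \<Xi> \<and> mat 1 \<in> \<Xi> \<and> \<Xi> \<subseteq> SOn1 \<and>
     cusps \<Gamma> = {bd_act (\<gamma> ** \<xi>) infty | \<gamma> \<xi>. \<gamma> \<in> \<Gamma> \<and> \<xi> \<in> \<Xi>} \<and>
     (\<forall>\<xi>\<in>\<Xi>. \<forall>\<xi>'\<in>\<Xi>. (\<exists>\<gamma>\<in>\<Gamma>. bd_act (\<gamma> ** \<xi>) infty = bd_act \<xi>' infty) \<longrightarrow> \<xi> = \<xi>')"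

end

theory Submission
  imports Defs "HOL-Real_Asymp.Real_Asymp"
begin


lemma sum_opt: "(\<Sum>i\<in>(UNIV::'n::finite option set). f i) = f None + (\<Sum>j\<in>UNIV. f (Some j))"
  by (simp add: UNIV_option_conv sum.reindex)

lemma mink_proj: "mink x y = x $ None * y $ None - proj x \<bullet> proj y"
  by (simp add: mink_def proj_def inner_vec_def)

lemma minkJ_mv: "minkJ *v y = (\<chi> i. if i = None then y $ i else - y $ i)"
proof -
  have "(\<Sum>j\<in>UNIV. (if i = j then (if i = None then 1 else -1) else 0) * y $ j) =
        (if i = None then y $ i else - y $ i)" for i
    by (simp add: if_distrib[of "\<lambda>c. c * _"] sum.delta cong: if_cong)
  thus ?thesis by (simp add: minkJ_def matrix_vector_mult_def vec_eq_iff)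
qed

lemma mink_J: "mink x y = x \<bullet> (minkJ *v y)"
  by (simp add: mink_def minkJ_mv inner_vec_def sum_opt sum_negf)

lemma mink_sym: "mink x y = mink y x"
  by (simp add: mink_def mult.commute)

lemma mink_add2: "mink x (y + z) = mink x y + mink x z"
  by (simp add: mink_def algebra_simps sum.distrib)
lemma mink_add1: "mink (y + z) x = mink y x + mink z x"
  by (simp add: mink_def algebra_simps sum.distrib)
lemma mink_diff2: "mink x (y - z) = mink x y - mink x z"
  by (simp add: mink_def algebra_simps sum_subtractf)
lemma mink_diff1: "mink (y - z) x = mink y x - mink z x"
  by (simp add: mink_def algebra_simps sum_subtractf)
lemma mink_scale2: "mink x (c *\<^sub>R y) = c * mink x y"
  by (simp add: mink_def algebra_simps sum_distrib_left)
lemma mink_scale1: "mink (c *\<^sub>R y) x = c * mink y x"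
  by (simp add: mink_def algebra_simps sum_distrib_left)
lemmas mink_lin = mink_add1 mink_add2 mink_diff1 mink_diff2 mink_scale1 mink_scale2

lemma inner_mv: "(A *v x) \<bullet> y = x \<bullet> (transpose A *v (y::real^'n::finite))"
  by (metis dot_lmul_matrix inner_commute vector_transpose_matrix transpose_transpose)

lemma mink_pres:
  assumes "transpose A ** minkJ ** A = minkJ"
  shows "mink (A *v x) (A *v y) = mink x y"
proof -
  have "mink (A *v x) (A *v y) = x \<bullet> (transpose A *v (minkJ *v (A *v y)))"
    by (simp add: mink_J inner_mv)
  also have "\<dots> = x \<bullet> ((transpose A ** minkJ ** A) *v y)"
    by (simp add: matrix_vector_mul_assoc matrix_mul_assoc)
  finally show ?thesis using assms by (simp add: mink_J)
qed

lemma mink_self: "mink x x = (x $ None)^2 - (norm (proj x))^2"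
  by (simp add: mink_proj dot_square_norm power2_eq_square)

lemma hyp_D:
  assumes "x \<in> hyp"
  shows "(x $ None)^2 = 1 + (norm (proj x))^2" "x $ None > 0" "norm (proj x) < x $ None"
proof -
  show 1: "(x $ None)^2 = 1 + (norm (proj x))^2" using assms mink_self[of x] by (simp add: hyp_def)
  show 2: "x $ None > 0" using assms by (simp add: hyp_def)
  have "(norm (proj x))^2 < (x $ None)^2" using 1 by simp
  thus "norm (proj x) < x $ None" using 2 power_less_imp_less_base[of "norm (proj x)" 2 "x $ None"] by linarith
qed

lemma bdry_D:
  assumes "p \<in> bdry"
  shows "p $ None = 1" "norm (proj p) = 1"
proof -
  show 1: "p $ None = 1" using assms by (simp add: bdry_def)
  have "(norm (proj p))^2 = 1" using assms mink_self[of p] by (auto simp add: bdry_def)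
  thus "norm (proj p) = 1" using norm_ge_zero[of "proj p"] power2_eq_1_iff[of "norm (proj p)"] by linarith
qed

lemma mink_hyp_ge1:
  assumes "x \<in> hyp" "y \<in> hyp"
  shows "mink x y \<ge> 1"
proof -
  define a where "a = norm (proj x)"
  define b where "b = norm (proj y)"
  have x2: "(x $ None)^2 = 1 + a^2" and y2: "(y $ None)^2 = 1 + b^2"
    using hyp_D assms a_def b_def by auto
  have xp: "x $ None > 0" "y $ None > 0" using hyp_D assms by auto
  have cs: "proj x \<bullet> proj y \<le> a * b" unfolding a_def b_def by (rule norm_cauchy_schwarz)
  have ab: "a \<ge> 0" "b \<ge> 0" by (auto simp: a_def b_def)
  have "(1 + a * b)^2 \<le> (x $ None * y $ None)^2"
  proof -
    have "(x $ None * y $ None)^2 = (1 + a^2) * (1 + b^2)" by (simp add: power_mult_distrib x2 y2)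
    moreover have "(1 + a*b)^2 \<le> (1 + a^2) * (1 + b^2)"
    proof -
      have "(1+a^2)*(1+b^2) - (1+a*b)^2 = (a-b)^2" by (simp add: power2_eq_square algebra_simps)
      thus ?thesis using zero_le_power2[of "a-b"] by linarith
    qed
    ultimately show ?thesis by simp
  qed
  moreover have "0 \<le> x $ None * y $ None" using xp by simp
  ultimately have "1 + a * b \<le> x $ None * y $ None"
    by (rule power2_le_imp_le)
  thus ?thesis using cs by (simp add: mink_proj)
qed

lemma mink_hyp_bdry_pos:
  assumes "x \<in> hyp" "p \<in> bdry"
  shows "mink x p > 0"
proof -
  have "proj x \<bullet> proj p \<le> norm (proj x) * norm (proj p)" by (rule norm_cauchy_schwarz)
  thus ?thesis using hyp_D[OF assms(1)] bdry_D[OF assms(2)] by (simp add: mink_proj)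
qed

lemma mink_bdry_nonneg:
  assumes "p \<in> bdry" "q \<in> bdry"
  shows "mink p q \<ge> 0"
proof -
  have "proj p \<bullet> proj q \<le> norm (proj p) * norm (proj q)" by (rule norm_cauchy_schwarz)
  thus ?thesis using bdry_D[OF assms(1)] bdry_D[OF assms(2)] by (simp add: mink_proj)
qed

lemma null_orth_zero:
  assumes "x \<in> hyp" "mink x n = 0" "mink n n = 0"
  shows "n = 0"
proof -
  have nn: "(norm (proj n))^2 = (n $ None)^2" using assms(3) mink_self[of n] by simp
  hence nn': "norm (proj n) = \<bar>n $ None\<bar>" using real_sqrt_abs[of "n $ None"] by (metis norm_ge_zero real_sqrt_unique)
  have e: "x $ None * n $ None = proj x \<bullet> proj n" using assms(2) by (simp add: mink_proj)
  have "\<bar>proj x \<bullet> proj n\<bar> \<le> norm (proj x) * norm (proj n)" by (rule Cauchy_Schwarz_ineq2)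
  hence "x $ None * \<bar>n $ None\<bar> \<le> norm (proj x) * \<bar>n $ None\<bar>"
    using e nn' hyp_D(2)[OF assms(1)] by (simp add: abs_mult)
  hence "\<bar>n $ None\<bar> = 0"
  proof (rule contrapos_pp)
    assume "\<bar>n $ None\<bar> \<noteq> 0"
    hence "\<bar>n $ None\<bar> > 0" by simp
    thus "\<not> x $ None * \<bar>n $ None\<bar> \<le> norm (proj x) * \<bar>n $ None\<bar>"
      using hyp_D(3)[OF assms(1)] by (simp add: not_le)
  qed
  hence n0: "n $ None = 0" and "proj n = 0" using nn' by auto
  hence "n $ Some j = 0" for j by (metis proj_def vec_lambda_beta zero_index)
  with n0 show "n = 0" by (metis vec_eq_iff zero_index option.exhaust)
qed

lemma future_pos:
  assumes "c \<in> hyp" "mink w w \<ge> 0" "mink c w > 0"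
  shows "w $ None > 0"
proof (rule ccontr)
  assume neg: "\<not> w $ None > 0"
  have "(norm (proj w))^2 \<le> (w $ None)^2" using assms(2) mink_self[of w] by simp
  hence nw: "norm (proj w) \<le> \<bar>w $ None\<bar>" using abs_le_square_iff by (metis abs_norm_cancel)
  have cs: "\<bar>proj c \<bullet> proj w\<bar> \<le> norm (proj c) * norm (proj w)" by (rule Cauchy_Schwarz_ineq2)
  have "norm (proj c) * norm (proj w) \<le> c $ None * \<bar>w $ None\<bar>"
    using hyp_D[OF assms(1)] nw by (intro mult_mono) auto
  hence "mink c w \<le> c $ None * w $ None + c $ None * \<bar>w $ None\<bar>" using cs by (simp add: mink_proj)
  also have "\<dots> = 0" using neg by simp
  finally show False using assms(3) by simp
qed

definition e0 :: "'n::finite mvec" where "e0 = (\<chi> i. if i = None then 1 else 0)"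

lemma e0_hyp: "e0 \<in> hyp"
  by (simp add: hyp_def mink_def e0_def)

lemma mink_e0[simp]: "mink e0 y = y $ None"
  by (simp add: mink_def e0_def)
lemma e0_None[simp]: "e0 $ None = 1" by (simp add: e0_def)
lemma mink_neg[simp]: "mink (-x) (-y) = mink x y"
  by (simp add: mink_def)

lemma SOn1_D:
  assumes "A \<in> SOn1"
  shows "mink (A *v x) (A *v y) = mink x y"
  using assms mink_pres by (auto simp: SOn1_def matrix_mul_assoc)

lemma SOn1_col: assumes "A \<in> SOn1" shows "A *v e0 \<in> hyp"
proof -
  have "(A *v e0) $ None = A $ None $ None"
    by (simp add: matrix_vector_mult_def e0_def if_distrib[of "\<lambda>c. _ * c"] sum.delta' cong: if_cong)
  thus ?thesis using assms SOn1_D[OF assms, of e0 e0] e0_hyp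
    by (simp add: hyp_def SOn1_def)
qed

lemma SOn1_hyp: assumes "A \<in> SOn1" "y \<in> hyp" shows "A *v y \<in> hyp"
proof -
  have "mink (A *v e0) (A *v y) > 0"
    using SOn1_D[OF assms(1)] mink_e0 assms(2) by (simp add: hyp_def)
  hence "(A *v y) $ None > 0"
    using future_pos[OF SOn1_col[OF assms(1)]] SOn1_D[OF assms(1), of y y] assms(2)
    by (simp add: hyp_def)
  thus ?thesis using SOn1_D[OF assms(1), of y y] assms(2) by (simp add: hyp_def)
qed

lemma SOn1_null_pos: assumes "A \<in> SOn1" "q \<in> bdry" shows "(A *v q) $ None > 0"
proof -
  have "mink (A *v e0) (A *v q) > 0"
    using SOn1_D[OF assms(1)] mink_e0 assms(2) by (simp add: bdry_def)
  thus ?thesis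
    using future_pos[OF SOn1_col[OF assms(1)]] SOn1_D[OF assms(1), of q q] assms(2)
    by (simp add: bdry_def)
qed

lemma normz_bdry: assumes "mink v v = 0" "v $ None > 0" shows "normz v \<in> bdry"
  using assms by (simp add: bdry_def normz_def mink_lin)

lemma bd_act_bdry: assumes "A \<in> SOn1" "q \<in> bdry" shows "bd_act A q \<in> bdry"
  unfolding bd_act_def using SOn1_null_pos[OF assms] SOn1_D[OF assms(1), of q q] assms(2)
  by (intro normz_bdry) (auto simp: bdry_def)

lemma SOn1_inv:
  assumes "A \<in> SOn1"
  shows "A ** matrix_inv A = mat 1"
proof -
  have "invertible A" using assms by (simp add: SOn1_def invertible_det_nz)
  then obtain B where "A ** B = mat 1 \<and> B ** A = mat 1" by (auto simp: invertible_def)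
  hence "A ** matrix_inv A = mat 1 \<and> matrix_inv A ** A = mat 1"
    unfolding matrix_inv_def by (rule someI)
  thus ?thesis by simp
qed

lemma SOn1_inv_hyp:
  assumes "A \<in> SOn1" "o' \<in> hyp"
  shows "matrix_inv A *v o' \<in> hyp" "mink (matrix_inv A *v o') q = mink o' (A *v q)"
proof -
  define w where "w = matrix_inv A *v o'"
  have Aw: "A *v w = o'" using SOn1_inv[OF assms(1)]
    by (simp add: w_def matrix_vector_mul_assoc)
  have ww: "mink w w = 1" using SOn1_D[OF assms(1), of w w] Aw assms(2) by (simp add: hyp_def)
  show "mink (matrix_inv A *v o') q = mink o' (A *v q)"
    using SOn1_D[OF assms(1), of w q] Aw by (simp add: w_def)
  have "w $ None \<noteq> 0"
  proof
    assume "w $ None = 0"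
    hence "mink w w \<le> 0" using mink_self[of w] by simp
    thus False using ww by simp
  qed
  moreover have "\<not> w $ None < 0"
  proof
    assume "w $ None < 0"
    hence "- w \<in> hyp" using ww by (simp add: hyp_def mink_lin)
    hence "A *v (- w) \<in> hyp" by (rule SOn1_hyp[OF assms(1)])
    moreover have "A *v (- w) = - (A *v w)"
      by (simp add: matrix_vector_mult_def vec_eq_iff sum_negf)
    ultimately show False using Aw assms(2) by (simp add: hyp_def)
  qed
  ultimately show "matrix_inv A *v o' \<in> hyp" using ww by (simp add: hyp_def w_def)
qed



lemma arcosh_cosh_abs: "arcosh (cosh (x::real)) = \<bar>x\<bar>"
proof (cases "x \<ge> 0")
  case True thus ?thesis by (simp add: arcosh_cosh_real)
next
  case False thus ?thesis using arcosh_cosh_real[of "-x"] by simp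
qed

lemma cosh_abs_real: "cosh \<bar>x::real\<bar> = cosh x"
  by (cases "x \<ge> 0") auto

lemma mink_bdry_self: "p \<in> bdry \<Longrightarrow> mink p p = 0" by (simp add: bdry_def)

lemma ray_exists:
  assumes "\<zeta> \<in> bdry"
  shows "\<exists>r. georay r \<and> ray_to r \<zeta>"
proof -
  define r where "r t = exp (-t) *\<^sub>R e0 + sinh t *\<^sub>R \<zeta>" for t :: real
  have z0: "\<zeta> $ None = 1" "mink \<zeta> \<zeta> = 0" using assms by (auto simp: bdry_def)
  have mr: "mink (r s) (r t) = cosh (s - t)" for s t
  proof -
    have "mink (r s) (r t) = exp (-s) * exp (-t) + exp (-s) * sinh t + sinh s * exp (-t)"
      using z0 by (simp add: r_def mink_lin mink_sym[of \<zeta> e0] algebra_simps)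
    also have "\<dots> = cosh (s - t)"
      by (simp add: sinh_field_def cosh_field_def exp_diff exp_minus field_simps)
    finally show ?thesis .
  qed
  have r0: "(r t) $ None = cosh t" for t
    using z0 by (simp add: r_def sinh_field_def cosh_field_def field_simps)
  have geo: "georay r"
    unfolding georay_def hyp_def hdist_def using mr r0 by (simp add: arcosh_cosh_abs)
  have nz: "normz (r t) = (exp (-t) / cosh t) *\<^sub>R e0 + (sinh t / cosh t) *\<^sub>R \<zeta>" for t
    unfolding normz_def r0 by (simp add: r_def scaleR_add_right)
  have l1: "((\<lambda>t::real. exp (-t) / cosh t) \<longlongrightarrow> 0) at_top" by real_asymp
  have l2: "((\<lambda>t::real. sinh t / cosh t) \<longlongrightarrow> 1) at_top" by real_asymp
  have "((\<lambda>t. (exp (-t) / cosh t) *\<^sub>R e0 + (sinh t / cosh t) *\<^sub>R \<zeta>) \<longlongrightarrow> 0 *\<^sub>R e0 + 1 *\<^sub>R \<zeta>) at_top"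
    by (intro tendsto_intros l1 l2)
  hence "ray_to r \<zeta>" unfolding ray_to_def nz by simp
  with geo show ?thesis by blast
qed

lemma mink_tendsto:
  assumes "(f \<longlongrightarrow> a) F"
  shows "((\<lambda>x. mink v (f x)) \<longlongrightarrow> mink v a) F"
  unfolding mink_def by (intro tendsto_intros assms)

lemma ray_form:
  assumes "georay r" "ray_to r \<zeta>" "\<zeta> \<in> bdry" "t \<ge> 0"
  shows "r t = exp (-t) *\<^sub>R r 0 + (sinh t / mink (r 0) \<zeta>) *\<^sub>R \<zeta>"
proof -
  define x where "x = r 0"
  have hyp: "r s \<in> hyp" for s using assms(1) by (simp add: georay_def)
  have mr: "mink (r s) (r u) = cosh (s - u)" if "s \<ge> 0" "u \<ge> 0" for s u
  proof -
    have "arcosh (mink (r s) (r u)) = \<bar>s - u\<bar>" using assms(1) that by (simp add: georay_def hdist_def)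
    hence "cosh (arcosh (mink (r s) (r u))) = cosh (s - u)" by (metis cosh_abs_real)
    thus ?thesis using mink_hyp_ge1[OF hyp hyp] by simp
  qed
  have k: "mink x \<zeta> > 0" unfolding x_def by (rule mink_hyp_bdry_pos[OF hyp assms(3)])
  have step2: "mink (r t) \<zeta> = exp (-t) * mink x \<zeta>"
  proof -
    have lim: "((\<lambda>T. mink v (normz (r T))) \<longlongrightarrow> mink v \<zeta>) at_top" for v
      using assms(2) unfolding ray_to_def by (rule mink_tendsto)
    have a1: "((\<lambda>T. mink (r t) (normz (r T)) * (2 * exp (-T) * cosh T)) \<longlongrightarrow> mink (r t) \<zeta> * 1) at_top"
      by (intro tendsto_intros lim) real_asymp
    have a2: "((\<lambda>T. (2 * exp (-T) * cosh (T - t)) * mink x (normz (r T))) \<longlongrightarrow> exp (-t) * mink x \<zeta>) at_top"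
      by (intro tendsto_intros lim) real_asymp
    have ev: "eventually (\<lambda>T. mink (r t) (normz (r T)) * (2 * exp (-T) * cosh T) =
                (2 * exp (-T) * cosh (T - t)) * mink x (normz (r T))) at_top"
      using eventually_ge_at_top[of t]
    proof eventually_elim
      case (elim T)
      have "mink (r t) (normz (r T)) * cosh T = cosh (T - t) * mink x (normz (r T))"
        using mr[of t T] mr[of 0 T] assms(4) elim
        by (simp add: normz_def mink_lin x_def cosh_minus[of "t - T", simplified])
      thus ?case by (simp add: algebra_simps)
    qed
    have "mink (r t) \<zeta> * 1 = exp (-t) * mink x \<zeta>"
      using tendsto_unique[OF _ a1 Lim_transform_eventually[OF a2 eventually_mono[OF ev]]] by auto
    thus ?thesis by simp
  qed
  define y where "y = exp (-t) *\<^sub>R x + (sinh t / mink x \<zeta>) *\<^sub>R \<zeta>"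
  define n where "n = r t - y"
  have xx: "mink x x = 1" using hyp[of 0] by (simp add: hyp_def x_def)
  have rr: "mink (r t) (r t) = 1" using hyp[of t] by (simp add: hyp_def)
  have xr: "mink x (r t) = cosh t" using mr[of 0 t] assms(4) by (simp add: x_def)
  have zz: "mink \<zeta> \<zeta> = 0" using assms(3) by (simp add: bdry_def)
  have xn: "mink x n = 0"
    using k by (simp add: n_def y_def mink_lin xx xr cosh_field_def sinh_field_def field_simps)
  have ry: "mink (r t) y = 1"
    using k step2 by (simp add: y_def mink_lin mink_sym[of "r t" x] xr cosh_field_def sinh_field_def
         exp_minus field_simps)
  have yy: "mink y y = 1"
    using k zz by (simp add: y_def mink_lin xx mink_sym[of \<zeta> x] sinh_field_def exp_minus field_simps)
  have "mink n n = 0"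
    using rr ry yy by (simp add: n_def mink_lin mink_sym[of y "r t"])
  hence "n = 0" using null_orth_zero[OF hyp[of 0]] xn by (simp add: x_def)
  thus ?thesis by (simp add: n_def y_def x_def)
qed

lemma some_ray:
  assumes "\<zeta> \<in> bdry"
  shows "georay (some_ray \<zeta>)" "ray_to (some_ray \<zeta>) \<zeta>"
  using someI_ex[OF ray_exists[OF assms]] unfolding some_ray_def by auto

lemma arcosh_asym:
  fixes p q :: real assumes "q > 0"
  shows "((\<lambda>t. arcosh (p * exp (-t) + q * sinh t) - t) \<longlongrightarrow> ln q) at_top"
proof -
  have ev: "eventually (\<lambda>t. p * exp (-t) + q * ((exp t - exp (-t))/2) \<ge> 1) at_top"
    using assms by real_asymp
  have lim: "((\<lambda>t. ln (p * exp (-t) + q * ((exp t - exp (-t))/2) + sqrt ((p * exp (-t) + q * ((exp t - exp (-t))/2))^2 - 1)) - t) \<longlongrightarrow> ln q) at_top"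
    using assms by real_asymp
  show ?thesis
    by (rule Lim_transform_eventually[OF lim]) (use ev in \<open>eventually_elim, simp add: arcosh_real_def sinh_field_def\<close>)
qed

lemma busemann_formula:
  assumes "\<zeta> \<in> bdry" "y \<in> hyp" "z \<in> hyp"
  shows "busemann \<zeta> y z = ln (mink y \<zeta>) - ln (mink z \<zeta>)"
proof -
  define r where "r = some_ray \<zeta>"
  have g: "georay r" "ray_to r \<zeta>" using some_ray[OF assms(1)] by (auto simp: r_def)
  define x where "x = r 0"
  have k: "mink x \<zeta> > 0" unfolding x_def
    by (rule mink_hyp_bdry_pos[OF _ assms(1)]) (use g in \<open>simp add: georay_def\<close>)
  have form: "mink v (r t) = mink v x * exp (-t) + (mink v \<zeta> / mink x \<zeta>) * sinh t" if "t \<ge> 0" for v t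
    using ray_form[OF g assms(1) that] by (simp add: mink_lin x_def)
  have lim: "((\<lambda>t. arcosh (mink v (r t)) - t) \<longlongrightarrow> ln (mink v \<zeta> / mink x \<zeta>)) at_top"
    if "v \<in> hyp" for v
    by (rule Lim_transform_eventually[OF arcosh_asym[of "mink v \<zeta> / mink x \<zeta>" "mink v x"]])
       (use mink_hyp_bdry_pos[OF that assms(1)] k in \<open>auto intro!: eventually_mono[OF eventually_ge_at_top[of 0]] simp: form\<close>)
  have "((\<lambda>t. (arcosh (mink y (r t)) - t) - (arcosh (mink z (r t)) - t)) \<longlongrightarrow>
          ln (mink y \<zeta> / mink x \<zeta>) - ln (mink z \<zeta> / mink x \<zeta>)) at_top"
    by (intro tendsto_intros lim assms)
  hence "((\<lambda>t. hdist y (r t) - hdist z (r t)) \<longlongrightarrow> ln (mink y \<zeta>) - ln (mink z \<zeta>)) at_top"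
    using k mink_hyp_bdry_pos[OF assms(2,1)] mink_hyp_bdry_pos[OF assms(3,1)]
    by (simp add: hdist_def ln_div)
  thus ?thesis unfolding busemann_def r_def by (rule tendsto_Lim[rotated]) simp
qed




lemma ln_sinh_asym:
  fixes p q :: real assumes "q > 0"
  shows "((\<lambda>t. ln (p * exp (-t) + q * sinh t) - t) \<longlongrightarrow> ln (q/2)) at_top"
proof -
  have "((\<lambda>t. ln (p * exp (-t) + q * ((exp t - exp (-t))/2)) - t) \<longlongrightarrow> ln (q/2)) at_top"
    using assms by real_asymp
  thus ?thesis by (simp only: sinh_field_def)
qed

lemma ident_not_conv: "\<not> ((\<lambda>t::real. t) \<longlongrightarrow> L) at_top"
proof
  assume "((\<lambda>t::real. t) \<longlongrightarrow> L) at_top"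
  moreover have "filterlim (\<lambda>t::real. t) at_infinity at_top"
    by (rule filterlim_at_top_imp_at_infinity[OF filterlim_ident])
  ultimately show False using not_tendsto_and_filterlim_at_infinity[of at_top "\<lambda>t::real. t" L] by simp
qed

lemma gromov_formula:
  assumes "o' \<in> hyp" "\<zeta>1 \<in> bdry" "\<zeta>2 \<in> bdry"
  shows "(gromov o' \<zeta>1 \<zeta>2)^2 = mink \<zeta>1 \<zeta>2 / (2 * mink o' \<zeta>1 * mink o' \<zeta>2)"
proof -
  define r where "r = some_ray \<zeta>1"
  have g: "georay r" "ray_to r \<zeta>1" using some_ray[OF assms(2)] by (auto simp: r_def)
  have rh: "r t \<in> hyp" for t using g by (simp add: georay_def)
  define x where "x = r 0"
  have k: "mink x \<zeta>1 > 0" unfolding x_def by (rule mink_hyp_bdry_pos[OF rh assms(2)])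
  have a: "mink x \<zeta>2 > 0" unfolding x_def by (rule mink_hyp_bdry_pos[OF rh assms(3)])
  have c0: "mink \<zeta>1 \<zeta>2 \<ge> 0" by (rule mink_bdry_nonneg[OF assms(2,3)])
  have m1pos: "mink o' \<zeta>1 > 0" "mink o' \<zeta>2 > 0" using mink_hyp_bdry_pos assms by auto
  define C where "C = ln (mink o' \<zeta>1) + ln (mink o' \<zeta>2)"
  define f where "f = (\<lambda>t. busemann \<zeta>1 o' (r t) + busemann \<zeta>2 o' (r t))"
  have zz: "mink \<zeta>1 \<zeta>1 = 0" using assms(2) by (simp add: bdry_def)
  have r1: "mink (r t) \<zeta>1 = exp (-t) * mink x \<zeta>1" if "t \<ge> 0" for t
    using ray_form[OF g assms(2) that] zz by (simp add: mink_lin x_def)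
  have r2: "mink (r t) \<zeta>2 = mink x \<zeta>2 * exp (-t) + (mink \<zeta>1 \<zeta>2 / mink x \<zeta>1) * sinh t" if "t \<ge> 0" for t
    using ray_form[OF g assms(2) that] by (simp add: mink_lin x_def)
  have r2pos: "mink (r t) \<zeta>2 > 0" for t by (rule mink_hyp_bdry_pos[OF rh assms(3)])
  have fe: "f t = C - ln (mink x \<zeta>1) + t - ln (mink (r t) \<zeta>2)" if "t \<ge> 0" for t
    using busemann_formula[OF assms(2,1) rh] busemann_formula[OF assms(3,1) rh] r1[OF that] k
    by (simp add: f_def C_def ln_mult)
  have gdef: "gromov o' \<zeta>1 \<zeta>2 = (if (\<exists>L. (f \<longlongrightarrow> L) at_top) then exp (- (Lim at_top f) / 2) else 0)"
    by (simp add: gromov_def f_def r_def Let_def)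
  show ?thesis
  proof (cases "mink \<zeta>1 \<zeta>2 = 0")
    case True
    have "\<not> (\<exists>L. (f \<longlongrightarrow> L) at_top)"
    proof
      assume "\<exists>L. (f \<longlongrightarrow> L) at_top"
      then obtain L where L: "(f \<longlongrightarrow> L) at_top" by blast
      define K where "K = C - ln (mink x \<zeta>1) - ln (mink x \<zeta>2)"
      have "((\<lambda>t. (f t - K) / 2) \<longlongrightarrow> (L - K) / 2) at_top" by (intro tendsto_intros L) simp
      moreover have "eventually (\<lambda>t. (f t - K) / 2 = t) at_top"
        using eventually_ge_at_top[of 0]
      proof eventually_elim
        case (elim t)
        thus ?case using fe[OF elim] r2[OF elim] True a by (simp add: K_def ln_mult)
      qed
      ultimately have "((\<lambda>t::real. t) \<longlongrightarrow> (L - K) / 2) at_top"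
        by (rule Lim_transform_eventually)
      thus False using ident_not_conv by blast
    qed
    thus ?thesis using True by (simp add: gdef)
  next
    case False
    hence cpos: "mink \<zeta>1 \<zeta>2 / mink x \<zeta>1 > 0" using c0 k by simp
    define L where "L = C - ln (mink x \<zeta>1) - ln (mink \<zeta>1 \<zeta>2 / mink x \<zeta>1 / 2)"
    have "((\<lambda>t. C - ln (mink x \<zeta>1) - (ln (mink x \<zeta>2 * exp (-t) + (mink \<zeta>1 \<zeta>2 / mink x \<zeta>1) * sinh t) - t)) \<longlongrightarrow> L) at_top"
      unfolding L_def by (intro tendsto_intros ln_sinh_asym cpos)
    hence fL: "(f \<longlongrightarrow> L) at_top"
      by (rule Lim_transform_eventually)
         (auto intro!: eventually_mono[OF eventually_ge_at_top[of 0]] simp: fe r2)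
    hence "gromov o' \<zeta>1 \<zeta>2 = exp (- L / 2)" using gdef tendsto_Lim[OF _ fL] by auto
    hence "(gromov o' \<zeta>1 \<zeta>2)^2 = exp (- L)"
      by (simp add: power2_eq_square flip: exp_add)
    also have "\<dots> = mink \<zeta>1 \<zeta>2 / (2 * mink o' \<zeta>1 * mink o' \<zeta>2)"
    proof -
      define q where "q = mink \<zeta>1 \<zeta>2 / mink x \<zeta>1 / 2"
      have qp: "q > 0" using cpos by (simp add: q_def)
      have "- L = ln (mink x \<zeta>1 * q) - ln (mink o' \<zeta>1 * mink o' \<zeta>2)"
        using k m1pos qp unfolding L_def C_def q_def[symmetric] by (simp add: ln_mult)
      hence "exp (- L) = (mink x \<zeta>1 * q) / (mink o' \<zeta>1 * mink o' \<zeta>2)"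
        using k m1pos qp by (simp add: exp_diff)
      moreover have "mink x \<zeta>1 * q = mink \<zeta>1 \<zeta>2 / 2" using k by (simp add: q_def)
      ultimately show ?thesis by simp
    qed
    finally show ?thesis .
  qed
qed




lemma normz_scale: assumes "s > 0" shows "normz (s *\<^sub>R v) = normz v"
  using assms by (simp add: normz_def)

lemma mink_o_null_pos:
  assumes "o' \<in> hyp" "mink P P = 0" "P $ None > 0"
  shows "mink o' P > 0"
proof -
  have "normz P \<in> bdry" by (rule normz_bdry[OF assms(2,3)])
  hence "mink o' (normz P) > 0" by (rule mink_hyp_bdry_pos[OF assms(1)])
  moreover have "P = P $ None *\<^sub>R normz P" using assms(3) by (simp add: normz_def)
  ultimately show ?thesis using assms(3)
    by (metis mink_scale2 mult_pos_pos)
qed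

lemma gromov_null:
  assumes "o' \<in> hyp" "mink P1 P1 = 0" "P1 $ None > 0" "mink P2 P2 = 0" "P2 $ None > 0"
  shows "(gromov o' (normz P1) (normz P2))^2 = mink P1 P2 / (2 * mink o' P1 * mink o' P2)"
proof -
  have b: "normz P1 \<in> bdry" "normz P2 \<in> bdry" using normz_bdry assms by auto
  have p: "mink o' P1 > 0" "mink o' P2 > 0" using mink_o_null_pos assms by auto
  show ?thesis
    unfolding gromov_formula[OF assms(1) b]
    using assms(3,5) p by (simp add: normz_def mink_lin field_simps)
qed

lemma htilde_formula:
  assumes "o' \<in> hyp" "infty \<in> bdry" "A \<in> SOn1" "\<xi> \<in> SOn1"
  shows "htilde o' infty A \<xi> = mink o' (A *v bd_act \<xi> infty) / mink o' (bd_act \<xi> infty)"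
proof -
  have q: "bd_act \<xi> infty \<in> bdry" by (rule bd_act_bdry[OF assms(4,2)])
  have h: "matrix_inv A *v o' \<in> hyp" and e: "mink (matrix_inv A *v o') (bd_act \<xi> infty) = mink o' (A *v bd_act \<xi> infty)"
    using SOn1_inv_hyp[OF assms(3,1)] by auto
  have p1: "mink (matrix_inv A *v o') (bd_act \<xi> infty) > 0" by (rule mink_hyp_bdry_pos[OF h q])
  have p2: "mink o' (bd_act \<xi> infty) > 0" by (rule mink_hyp_bdry_pos[OF assms(1) q])
  show ?thesis unfolding htilde_def busemann_formula[OF q h assms(1)]
    using p1 p2 e by (simp add: exp_diff)
qed

lemma bd_act_prod:
  assumes "A \<in> SOn1" "\<xi> \<in> SOn1" "infty \<in> bdry"
  shows "bd_act (A ** \<xi>) infty = normz (A *v bd_act \<xi> infty)"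
proof -
  have s: "(\<xi> *v infty) $ None > 0" by (rule SOn1_null_pos[OF assms(2,3)])
  have "\<xi> *v infty = (\<xi> *v infty) $ None *\<^sub>R bd_act \<xi> infty"
    using s by (simp add: bd_act_def normz_def)
  hence "(A ** \<xi>) *v infty = (\<xi> *v infty) $ None *\<^sub>R (A *v bd_act \<xi> infty)"
    by (metis matrix_vector_mul_assoc matrix_vector_mult_scaleR)
  thus ?thesis using s by (simp add: bd_act_def normz_scale)
qed

lemma key:
  assumes "o' \<in> hyp" "infty \<in> bdry" "A1 \<in> SOn1" "A2 \<in> SOn1" "\<xi>1 \<in> SOn1" "\<xi>2 \<in> SOn1"
  shows "(gromov o' (bd_act (A1 ** \<xi>1) infty) (bd_act (A2 ** \<xi>2) infty))\<^sup>2
           * htilde o' infty A1 \<xi>1 * htilde o' infty A2 \<xi>2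
       = mink (A1 *v bd_act \<xi>1 infty) (A2 *v bd_act \<xi>2 infty) /
           (2 * mink o' (bd_act \<xi>1 infty) * mink o' (bd_act \<xi>2 infty))"
proof -
  define q1 where "q1 = bd_act \<xi>1 infty"
  define q2 where "q2 = bd_act \<xi>2 infty"
  have q: "q1 \<in> bdry" "q2 \<in> bdry" using bd_act_bdry assms by (auto simp: q1_def q2_def)
  define Q1 where "Q1 = A1 *v q1"
  define Q2 where "Q2 = A2 *v q2"
  have n1: "mink Q1 Q1 = 0" "Q1 $ None > 0"
    using SOn1_D[OF assms(3), of q1 q1] SOn1_null_pos[OF assms(3) q(1)] q(1)
    by (auto simp: Q1_def bdry_def)
  have n2: "mink Q2 Q2 = 0" "Q2 $ None > 0"
    using SOn1_D[OF assms(4), of q2 q2] SOn1_null_pos[OF assms(4) q(2)] q(2)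
    by (auto simp: Q2_def bdry_def)
  have p: "mink o' Q1 > 0" "mink o' Q2 > 0" using mink_o_null_pos[OF assms(1)] n1 n2 by auto
  have pq: "mink o' q1 > 0" "mink o' q2 > 0" using mink_hyp_bdry_pos[OF assms(1)] q by auto
  show ?thesis
    unfolding bd_act_prod[OF assms(3,5,2)] bd_act_prod[OF assms(4,6,2)]
      htilde_formula[OF assms(1,2,3,5)] htilde_formula[OF assms(1,2,4,6)]
      q1_def[symmetric] q2_def[symmetric] Q1_def[symmetric] Q2_def[symmetric]
      gromov_null[OF assms(1) n1 n2]
    using p pq by (simp add: field_simps)
qed



theorem proposition3p7:
  fixes o' infty :: "'n::finite mvec"
    and \<Gamma> \<Xi> :: "'n mmat set"
    and \<gamma> \<gamma>1 \<gamma>2 \<xi>1 \<xi>2 :: "'n mmat"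
  assumes "CARD('n) \<ge> 2"
    and "o' \<in> hyp" and "infty \<in> bdry"
    and "discrete_subgroup \<Gamma>" and "finite_covolume \<Gamma>"
    and "cusp_reps \<Gamma> infty \<Xi>"
    and "\<gamma> \<in> \<Gamma>" and "\<gamma>1 \<in> \<Gamma>" and "\<gamma>2 \<in> \<Gamma>" and "\<xi>1 \<in> \<Xi>" and "\<xi>2 \<in> \<Xi>"
  shows "(gromov o' (bd_act (\<gamma>1 ** \<xi>1) infty) (bd_act (\<gamma>2 ** \<xi>2) infty))\<^sup>2
           * htilde o' infty \<gamma>1 \<xi>1 * htilde o' infty \<gamma>2 \<xi>2
       = (gromov o' (bd_act (\<gamma> ** \<gamma>1 ** \<xi>1) infty) (bd_act (\<gamma> ** \<gamma>2 ** \<xi>2) infty))\<^sup>2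
           * htilde o' infty (\<gamma> ** \<gamma>1) \<xi>1 * htilde o' infty (\<gamma> ** \<gamma>2) \<xi>2"
proof -
  have G: "\<Gamma> \<subseteq> SOn1" "\<And>g h. g \<in> \<Gamma> \<Longrightarrow> h \<in> \<Gamma> \<Longrightarrow> g ** h \<in> \<Gamma>"
    using assms(4) by (auto simp: discrete_subgroup_def)
  have X: "\<Xi> \<subseteq> SOn1" using assms(6) by (simp add: cusp_reps_def)
  have s: "\<gamma> \<in> SOn1" "\<gamma>1 \<in> SOn1" "\<gamma>2 \<in> SOn1" "\<gamma> ** \<gamma>1 \<in> SOn1" "\<gamma> ** \<gamma>2 \<in> SOn1"
    "\<xi>1 \<in> SOn1" "\<xi>2 \<in> SOn1"
    using G X assms(7-11) by auto
  have "mink ((\<gamma> ** \<gamma>1) *v bd_act \<xi>1 infty) ((\<gamma> ** \<gamma>2) *v bd_act \<xi>2 infty)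
      = mink (\<gamma>1 *v bd_act \<xi>1 infty) (\<gamma>2 *v bd_act \<xi>2 infty)"
    by (simp add: SOn1_D[OF s(1)] flip: matrix_vector_mul_assoc)
  thus ?thesis
    using key[OF assms(2,3) s(2,3,6,7)] key[OF assms(2,3) s(4,5,6,7)] by simp
qed

end
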